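(* Let $n\ge 2$ and $T=n$, and consider the following VOM instance: $J=\{1,\dots,n\}$; each $j\in J$ has exactly $n$ neighbors, and the neighborhoods $\mathcal N_j$ are pairwise disjoint except that they all contain one common offline agent $i^*$ (so $|I|=n(n-1)+1$, $i^*$ is adjacent to all of $J$, and every $i\ne i^*$ has exactly one neighbor). Weights: $w_{i^*}=1$ and $w_i=n^{-3}$ for $i\ne i^*$. For $n$ sufficiently large, the vector $x_{ij}=1/n$ for all $(i,j)\in E$ is an optimal solution of LP-VOM with value $1+n^{-2}-n^{-3}$, and SAMP-B run with this $x$ achieves expected total weight $\sum_i w_i\mathbb E[Z_i]$ at most $\big(1-1/e+O(\ln n/n)\big)$ times the LP-VOM optimum. In particular SAMP-B cannot achieve a competitive ratio exceeding $1-1/e$ for VOM.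
   Context: Model. An instance consists of a finite bipartite graph $(I,J,E)$, where $I$ is the set of offline agents and $J$ the set of online agent types, with $|J|=T$, together with weights $w_i\ge 0$. For $i\in I$ let $\mathcal N_i=\{j\in J:(i,j)\in E\}$ and for $j\in J$ let $\mathcal N_j=\{i\in I:(i,j)\in E\}$; write $i\sim j$ (equivalently $j\sim i$) when $(i,j)\in E$. There are $T$ rounds $t=1,\dots,T$; in each round exactly one online agent arrives, whose type is drawn uniformly at random from $J$ (each type with probability $1/T$), independently across rounds. Each offline agent can be matched at most once. When an online agent of type $j$ arrives, an online algorithm must immediately and irrevocably either reject it or match it to a currently unmatched $i\in\mathcal N_j$. Let $Z_i$ be the indicator that offline agent $i$ is matched by the end. VOM maximizes $\sum_{i\in I}w_i\mathbb E[Z_i]$. Benchmark LP. Fix an integer constant $K\ge 1$ independent of $T$. Variables $x_{ij}\ge 0$ for $(i,j)\in E$, with constraints (C1) $\sum_{i\sim j}x_{ij}\le 1$ for all $j\in J$; (C2) $\sum_{j\sim i}x_{ij}\le 1$ for all $i\in I$; (C3) $\sum_{j\in S}x_{ij}\le 1-e^{-|S|}$ for all $i\in I$ and all $S\subseteq\mathcal N_i$ with $|S|\le K$. LP-VOM maximizes $\sum_{i\in I}w_i\sum_{j\sim i}x_{ij}$ subject to (C1)–(C3). SAMP-B (sampling with boosting), given a nonnegative vector $x=(x_{ij})_{(i,j)\in E}$: in each round $t$, when an online agent of type $j$ arrives, let $\mathcal N_{j,t}$ be the set of neighbors of $j$ that are unmatched at the beginning of round $t$; if $\mathcal N_{j,t}=\emptyset$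 (or $\sum_{i'\in\mathcal N_{j,t}}x_{i'j}=0$) reject; otherwise match $j$ to $i\in\mathcal N_{j,t}$ chosen with probability $x_{ij}/\sum_{i'\in\mathcal N_{j,t}}x_{i'j}$. *)

theory Defs
  imports Complex_Main
begin

text \<open>An instance: offline agents I, online types J, edge set E \<subseteq> I \<times> J, weights w.
  A vector x is a function on pairs; only its values on E matter.\<close>

definition nbr_off :: "('i \<times> 'j) set \<Rightarrow> 'j \<Rightarrow> 'i set" where
  "nbr_off E j = {i. (i, j) \<in> E}"

definition nbr_on :: "('i \<times> 'j) set \<Rightarrow> 'i \<Rightarrow> 'j set" where
  "nbr_on E i = {j. (i, j) \<in> E}"

definition lp_feasible :: "nat \<Rightarrow> 'i set \<Rightarrow> 'j set \<Rightarrow> ('i \<times> 'j) set \<Rightarrow> ('i \<Rightarrow> 'j \<Rightarrow> real) \<Rightarrow> bool" where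
  "lp_feasible K I J E x \<longleftrightarrow>
     (\<forall>(i, j) \<in> E. x i j \<ge> 0) \<and>
     (\<forall>j \<in> J. (\<Sum>i \<in> nbr_off E j. x i j) \<le> 1) \<and>
     (\<forall>i \<in> I. (\<Sum>j \<in> nbr_on E i. x i j) \<le> 1) \<and>
     (\<forall>i \<in> I. \<forall>S. S \<subseteq> nbr_on E i \<and> card S \<le> K \<longrightarrow>
          (\<Sum>j \<in> S. x i j) \<le> 1 - exp (- real (card S)))"

definition lp_obj :: "'i set \<Rightarrow> ('i \<times> 'j) set \<Rightarrow> ('i \<Rightarrow> real) \<Rightarrow> ('i \<Rightarrow> 'j \<Rightarrow> real) \<Rightarrow> real" where
  "lp_obj I E w x = (\<Sum>i \<in> I. w i * (\<Sum>j \<in> nbr_on E i. x i j))"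

definition lp_optimal :: "nat \<Rightarrow> 'i set \<Rightarrow> 'j set \<Rightarrow> ('i \<times> 'j) set \<Rightarrow> ('i \<Rightarrow> real) \<Rightarrow> ('i \<Rightarrow> 'j \<Rightarrow> real) \<Rightarrow> bool" where
  "lp_optimal K I J E w x \<longleftrightarrow> lp_feasible K I J E x \<and>
     (\<forall>y. lp_feasible K I J E y \<longrightarrow> lp_obj I E w y \<le> lp_obj I E w x)"

text \<open>Expected final matched weight of SAMP-B. sampB_exp J E w x t M is the expected value of
  the total weight of matched offline agents at the end, given that M is the set of matched
  offline agents and t rounds remain; each round the arriving type is uniform on J
  (probability 1 / card J each).\<close>
fun sampB_exp :: "'j set \<Rightarrow> ('i \<times> 'j) set \<Rightarrow> ('i \<Rightarrow> real) \<Rightarrow> ('i \<Rightarrow> 'j \<Rightarrow> real)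
                  \<Rightarrow> nat \<Rightarrow> 'i set \<Rightarrow> real" where
  "sampB_exp J E w x 0 M = (\<Sum>i \<in> M. w i)"
| "sampB_exp J E w x (Suc t) M =
     (\<Sum>j \<in> J. (let N = nbr_off E j - M; S = (\<Sum>i' \<in> N. x i' j) in
        if N = {} \<or> S = 0 then sampB_exp J E w x t M
        else (\<Sum>i \<in> N. (x i j / S) * sampB_exp J E w x t (insert i M)))) / real (card J)"

definition sampB_value :: "'j set \<Rightarrow> ('i \<times> 'j) set \<Rightarrow> ('i \<Rightarrow> real) \<Rightarrow> ('i \<Rightarrow> 'j \<Rightarrow> real) \<Rightarrow> real" where
  "sampB_value J E w x = sampB_exp J E w x (card J) {}"

text \<open>Offline agents: None is i*, Some (j, k) with k \<in> {1..n-1} is the k-th private neighbour of j.\<close>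
definition inst_I :: "nat \<Rightarrow> (nat \<times> nat) option set" where
  "inst_I n = insert None {Some (j, k) | j k. j \<in> {1..n} \<and> k \<in> {1..n - 1}}"

definition inst_J :: "nat \<Rightarrow> nat set" where
  "inst_J n = {1..n}"

definition inst_E :: "nat \<Rightarrow> ((nat \<times> nat) option \<times> nat) set" where
  "inst_E n = {(None, j) | j. j \<in> {1..n}} \<union>
              {(Some (j, k), j) | j k. j \<in> {1..n} \<and> k \<in> {1..n - 1}}"

definition inst_w :: "nat \<Rightarrow> (nat \<times> nat) option \<Rightarrow> real" where
  "inst_w n i = (if i = None then 1 else 1 / real n ^ 3)"

definition inst_x :: "nat \<Rightarrow> (nat \<times> nat) option \<Rightarrow> nat \<Rightarrow> real" where
  "inst_x n i j = 1 / real n"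

end

theory Submission
  imports Defs
begin

definition priv :: "nat \<Rightarrow> nat \<Rightarrow> (nat \<times> nat) option set" where
  "priv n j = (\<lambda>k. Some (j, k)) ` {1..n-1}"

lemma priv_finite[simp]: "finite (priv n j)" by (simp add: priv_def)
lemma card_priv: "card (priv n j) = n - 1"
  unfolding priv_def by (subst card_image) (auto simp: inj_on_def)
lemma None_notin_priv[simp]: "None \<notin> priv n j" by (auto simp: priv_def)
lemma priv_disj: "i \<in> priv n j \<Longrightarrow> i \<in> priv n j' \<Longrightarrow> j = j'" by (auto simp: priv_def)

lemma nbr_off_inst: "j \<in> {1..n} \<Longrightarrow> nbr_off (inst_E n) j = insert None (priv n j)"
  by (auto simp: nbr_off_def inst_E_def priv_def)

definition cnt :: "nat \<Rightarrow> (nat \<times> nat) option set \<Rightarrow> nat \<Rightarrow> nat" where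
  "cnt n M j = card (priv n j \<inter> M)"

lemma cnt_le: "cnt n M j \<le> n - 1"
  unfolding cnt_def by (metis card_priv card_mono Int_lower1 priv_finite)

lemma card_priv_diff: "card (priv n j - M) = n - 1 - cnt n M j"
  unfolding cnt_def by (simp add: card_Diff_subset_Int card_priv)

lemma cnt_insert:
  assumes "i \<in> priv n j" "i \<notin> M"
  shows "cnt n (insert i M) j' = (if j' = j then cnt n M j + 1 else cnt n M j')"
proof (cases "j' = j")
  case True
  then have "priv n j' \<inter> insert i M = insert i (priv n j \<inter> M)" using assms by auto
  then show ?thesis using True assms unfolding cnt_def by simp
next
  case False
  then have "i \<notin> priv n j'" using assms priv_disj by metis
  then have "priv n j' \<inter> insert i M = priv n j' \<inter> M" by auto
  then show ?thesis using False unfolding cnt_def by simp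
qed

definition ff :: "nat \<Rightarrow> nat \<Rightarrow> real" where
  "ff n m = real n * real m / (real n - real m)"

lemma ff_nonneg: "n \<ge> 1 \<Longrightarrow> m \<le> n - 1 \<Longrightarrow> ff n m \<ge> 0"
  unfolding ff_def by (auto intro!: divide_nonneg_pos)

definition Sf :: "nat \<Rightarrow> (nat \<times> nat) option set \<Rightarrow> real" where
  "Sf n M = (\<Sum>j\<in>{1..n}. ff n (cnt n M j))"

lemma Sf_nonneg: "n \<ge> 1 \<Longrightarrow> Sf n M \<ge> 0"
  unfolding Sf_def by (intro sum_nonneg ff_nonneg cnt_le) auto

lemma Sf_empty: "Sf n {} = 0"
  unfolding Sf_def cnt_def ff_def by simp

lemma Sf_insert:
  assumes j: "j \<in> {1..n}" and "i \<in> priv n j" "i \<notin> M"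
  shows "Sf n (insert i M) = Sf n M + (ff n (cnt n M j + 1) - ff n (cnt n M j))"
proof -
  have "\<forall>j'\<in>{1..n}. ff n (cnt n (insert i M) j') = ff n (cnt n M j') +
     (if j' = j then ff n (cnt n M j + 1) - ff n (cnt n M j) else 0)"
    using cnt_insert[OF assms(2,3)] by auto
  then have "Sf n (insert i M) = (\<Sum>j'\<in>{1..n}. ff n (cnt n M j') +
     (if j' = j then ff n (cnt n M j + 1) - ff n (cnt n M j) else 0))"
    unfolding Sf_def by (intro sum.cong) auto
  also have "\<dots> = Sf n M + (ff n (cnt n M j + 1) - ff n (cnt n M j))"
    unfolding Sf_def sum.distrib using j by (simp add: sum.delta)
  finally show ?thesis .
qed

fun Dd :: "nat \<Rightarrow> nat \<Rightarrow> real" where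
  "Dd n 0 = 0"
| "Dd n (Suc t) = (1 + 2 / real n) * Dd n t + 1 / real n ^ 3"

fun Ee :: "nat \<Rightarrow> nat \<Rightarrow> real" where
  "Ee n 0 = 0"
| "Ee n (Suc t) = Ee n t + Dd n t"

lemma Dd_nonneg: "Dd n t \<ge> 0"
  by (induction t) auto

lemma Ee_nonneg: "Ee n t \<ge> 0"
  by (induction t) (auto intro: add_nonneg_nonneg Dd_nonneg)

definition LL :: "nat \<Rightarrow> nat \<Rightarrow> (nat \<times> nat) option set \<Rightarrow> real" where
  "LL n t M = (1 - 1 / real n) ^ t - Ee n t - Dd n t * Sf n M"

definition WW :: "nat \<Rightarrow> (nat \<times> nat) option set \<Rightarrow> real" where
  "WW n M = (\<Sum>i\<in>M. inst_w n i)"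

abbreviation SB :: "nat \<Rightarrow> nat \<Rightarrow> (nat \<times> nat) option set \<Rightarrow> real" where
  "SB n \<equiv> sampB_exp (inst_J n) (inst_E n) (inst_w n) (inst_x n)"

lemma WW_insert: "finite M \<Longrightarrow> i \<notin> M \<Longrightarrow> WW n (insert i M) = WW n M + inst_w n i"
  unfolding WW_def by simp

lemma wavg:
  fixes a v :: "'a \<Rightarrow> real"
  assumes "finite N" "\<And>i. i \<in> N \<Longrightarrow> a i \<ge> 0" "S = (\<Sum>i\<in>N. a i)" "S \<noteq> 0"
    "\<And>i. i \<in> N \<Longrightarrow> v i \<le> B"
  shows "(\<Sum>i\<in>N. a i / S * v i) \<le> B"
proof -
  have Spos: "S > 0" using assms(2,3,4) sum_nonneg[of N a] by force
  have "(\<Sum>i\<in>N. a i / S * v i) \<le> (\<Sum>i\<in>N. a i / S * B)"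
    by (intro sum_mono mult_left_mono assms(5)) (use Spos assms(2) in auto)
  also have "\<dots> = B * (\<Sum>i\<in>N. a i) / S" by (simp add: sum_distrib_left sum_divide_distrib[symmetric] algebra_simps)
  also have "\<dots> = B" using assms(3) Spos by simp
  finally show ?thesis .
qed

lemma SB_Suc: "SB n (Suc t) M = (\<Sum>j\<in>{1..n}. (let N = nbr_off (inst_E n) j - M; S = (\<Sum>i'\<in>N. inst_x n i' j) in
        if N = {} \<or> S = 0 then SB n t M
        else (\<Sum>i\<in>N. (inst_x n i j / S) * SB n t (insert i M)))) / real n"
  by (simp only: sampB_exp.simps inst_J_def card_atLeastAtMost) simp

lemma SB_A:
  assumes n2: "n \<ge> 2"
  shows "finite M \<Longrightarrow> None \<in> M \<Longrightarrow> SB n t M \<le> WW n M + real t / real n ^ 3"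
proof (induction t arbitrary: M)
  case 0
  then show ?case by (simp add: WW_def)
next
  case (Suc t M)
  have npos: "real n > 0" using n2 by simp
  have B0: "real t / real n ^ 3 \<le> real (Suc t) / real n ^ 3"
    using npos by (simp add: divide_right_mono)
  have hterm: "(let N = nbr_off (inst_E n) j - M; S = (\<Sum>i'\<in>N. inst_x n i' j) in
        if N = {} \<or> S = 0 then SB n t M
        else (\<Sum>i\<in>N. (inst_x n i j / S) * SB n t (insert i M))) \<le> WW n M + real (Suc t) / real n ^ 3"
    if j: "j \<in> {1..n}" for j
  proof -
    define N where "N = nbr_off (inst_E n) j - M"
    define S where "S = (\<Sum>i'\<in>N. inst_x n i' j)"
    have finN: "finite N" unfolding N_def using nbr_off_inst[OF j] by simp
    show ?thesis
    proof (cases "N = {} \<or> S = 0")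
      case True
      then show ?thesis unfolding N_def S_def Let_def using Suc.IH[OF Suc.prems] B0 by auto
    next
      case False
      have "(\<Sum>i\<in>N. (inst_x n i j / S) * SB n t (insert i M)) \<le> WW n M + real (Suc t) / real n ^ 3"
      proof (rule wavg[OF finN _ S_def])
        show "S \<noteq> 0" using False by simp
        show "0 \<le> inst_x n i j" for i by (simp add: inst_x_def)
        fix i assume i: "i \<in> N"
        then have iM: "i \<notin> M" unfolding N_def by auto
        then have iN: "i \<noteq> None" using Suc.prems(2) by metis
        have "SB n t (insert i M) \<le> WW n (insert i M) + real t / real n ^ 3"
          using Suc.IH[of "insert i M"] Suc.prems by simp
        also have "\<dots> = WW n M + 1 / real n ^ 3 + real t / real n ^ 3"
          using WW_insert[OF Suc.prems(1) iM] iN by (simp add: inst_w_def)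
        also have "\<dots> = WW n M + real (Suc t) / real n ^ 3" by (simp add: add_divide_distrib)
        finally show "SB n t (insert i M) \<le> WW n M + real (Suc t) / real n ^ 3" .
      qed
      then show ?thesis using False unfolding N_def S_def Let_def by auto
    qed
  qed
  have "SB n (Suc t) M \<le> (real (card {1..n}) * (WW n M + real (Suc t) / real n ^ 3)) / real n"
    unfolding SB_Suc by (intro divide_right_mono sum_bounded_above hterm) auto
  also have "\<dots> = WW n M + real (Suc t) / real n ^ 3" using npos by simp
  finally show ?case .
qed

lemma k1: fixes nn K m :: real assumes nn: "nn = K + m" and K1': "K > 1"
  shows "((K - 1) / K) * (nn*(m+1)/(nn - m - 1) - nn*m/(nn-m)) = nn^2/K^2"
proof -
  have a: "nn - m - 1 = K - 1" "nn - m = K" using nn by auto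
  have b: "K - 1 \<noteq> 0" "K \<noteq> 0" using K1' by auto
  have "((K - 1) / K) * (nn*(m+1)/(K - 1) - nn*m/K) = nn*(m+1)/K - (K-1)*nn*m/K^2"
    using b by (simp add: field_simps power2_eq_square)
  also have "\<dots> = nn * (K + m) / K^2" using b by (simp add: field_simps power2_eq_square)
  finally show ?thesis unfolding a using nn by (simp add: power2_eq_square)
qed
lemma k2: fixes nn K m :: real assumes nn: "nn = K + m" and K1: "K \<ge> 1" and m0: "m \<ge> 0"
  shows "nn^2/K^2 \<le> 1 + 2 * (nn*m/K)"
proof -
  have Kp: "K > 0" using K1 by simp
  have "m^2 * 1 \<le> m^2 * (2*K)" using K1 m0 by (intro mult_left_mono) auto
  then have "m^2 \<le> 2*m*m*K" by (simp add: power2_eq_square algebra_simps)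
  moreover have "(K*m) * 1 \<le> (K*m) * K" using K1 m0 by (intro mult_left_mono) auto
  ultimately have "(K+m)^2 \<le> K^2 + 2 * (K+m) * m * K" by (simp add: power2_eq_square algebra_simps)
  then have "nn^2 \<le> K^2 + 2 * nn * m * K" using nn by simp
  then have "nn^2/K^2 \<le> (K^2 + 2 * nn * m * K)/K^2" using Kp by (simp add: divide_right_mono)
  also have "\<dots> = 1 + 2 * (nn*m/K)" using Kp by (simp add: field_simps power2_eq_square)
  finally show ?thesis .
qed

lemma e2: fixes nn K m :: real assumes nn: "nn = K + m" and K1': "K > 1" and m0: "m \<ge> 0"
  shows "1 - 1/nn - (1/nn^2) * (nn*m/(nn-m)) = (K - 1)/K"
proof -
  have a: "nn - m = K" using nn by auto
  have b: "nn \<noteq> 0" "K \<noteq> 0" "nn * K \<noteq> 0" using nn K1' m0 by auto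
  have "1 - 1/nn - (1/nn^2) * (nn*m/K) = 1 - (K + m)/(nn*K)" using b by (simp add: field_simps power2_eq_square)
  also have "\<dots> = (K - 1)/K" using nn b by (simp add: field_simps)
  finally show ?thesis unfolding a .
qed

lemma Leq: fixes K W tc p a E D Sf Dl :: real assumes "K > 0"
  shows "(1/K) * ((W + 1 + tc) + (K - 1) * (W + p + tc + 1 - (a - E - D * (Sf + Dl))))
      = W + 1 + tc + ((K-1)/K) * (p - a + E + D * Sf) + D * (((K-1)/K) * Dl)"
  using assms by (simp add: field_simps)
lemma alg:
  fixes nn K m a E D Sf W tc p :: real
  assumes nn: "nn = K + m" and K1: "K \<ge> 1" and m0: "m \<ge> 0" and a0: "0 \<le> a" and a1: "a \<le> 1"
    and E0: "E \<ge> 0" and D0: "D \<ge> 0" and S0: "Sf \<ge> 0" and p0: "p \<ge> 0"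
  shows "(1/K) * ((W + 1 + tc) + (K - 1) * (W + p + tc + 1 - (a - E - D * (Sf + (nn*(m+1)/(nn - m - 1) - nn*m/(nn-m))))))
     \<le> W + (tc + p) + 1 - ((a*(1 - 1/nn) - E - D*Sf - D) - (a/nn^2 + 2*D) * (nn*m/(nn-m)))"
proof (cases "K = 1")
  case True
  then have nm: "nn - m = 1" "nn = 1 + m" using nn by auto
  have nnp: "nn \<noteq> 0" using nm m0 by simp
  have q0: "a*(1 - 1/nn) = a*(nn-1)/nn" using nnp by (simp add: field_simps)
  have q1: "a*(1 - 1/nn) = a*m/nn" unfolding q0 using nm(1) by (simp add: algebra_simps)
  have q2: "(a/nn^2) * (nn*m/(nn-m)) = a*m/nn" unfolding nm(1) using nnp by (simp add: power2_eq_square field_simps)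
  have Z: "a*(1 - 1/nn) - (a/nn^2) * (nn*m/(nn-m)) = 0"
    using q1 q2 by simp
  have Z2: "(a*(1 - 1/nn) - E - D*Sf - D) - (a/nn^2 + 2*D) * (nn*m/(nn-m)) = - E - D*Sf - D - 2*D*(nn*m/(nn-m))"
  proof -
    have "(a/nn^2 + 2*D) * (nn*m/(nn-m)) = (a/nn^2) * (nn*m/(nn-m)) + 2*D*(nn*m/(nn-m))" by (rule distrib_right)
    then show ?thesis using Z by linarith
  qed
  have "D * (nn*m/(nn-m)) \<ge> 0" using nm m0 D0 by simp
  moreover have "D * Sf \<ge> 0" using D0 S0 by simp
  moreover have "(1/K) * ((W + 1 + tc) + (K - 1) * (W + p + tc + 1 - (a - E - D * (Sf + (nn*(m+1)/(nn - m - 1) - nn*m/(nn-m)))))) = W + 1 + tc"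
    using True by simp
  ultimately show ?thesis unfolding Z2 using E0 D0 p0 by linarith
next
  case False
  then have K1': "K > 1" using K1 by simp
  have Kp: "K > 0" using K1' by simp
  define Dl where "Dl = nn*(m+1)/(nn - m - 1) - nn*m/(nn-m)"
  define rho where "rho = (K - 1) / K"
  define f where "f = nn*m/(nn-m)"
  have e1: "nn - m = K" using nn by simp
  have fK: "f = nn*m/K" unfolding f_def e1 ..
  have kk1: "rho * Dl = nn^2/K^2" unfolding rho_def Dl_def using k1[OF nn K1'] .
  have kk2: "nn^2/K^2 \<le> 1 + 2 * f" unfolding fK using k2[OF nn K1 m0] .
  have r0: "0 \<le> rho" "rho \<le> 1" unfolding rho_def using K1' by auto
  have ee2: "1 - 1/nn - (1/nn^2) * f = rho" unfolding rho_def f_def using e2[OF nn K1' m0] .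
  have L: "(1/K) * ((W + 1 + tc) + (K - 1) * (W + p + tc + 1 - (a - E - D * (Sf + Dl))))
      = W + 1 + tc + rho * (p - a + E + D * Sf) + D * (rho * Dl)"
    unfolding rho_def using Leq[OF Kp] .
  have q: "a*(1 - 1/nn) - (a/nn^2 + 2*D) * f = a*(1 - 1/nn - (1/nn^2) * f) - 2*D*f"
    by (simp add: algebra_simps)
  have R: "W + (tc + p) + 1 - ((a*(1 - 1/nn) - E - D*Sf - D) - (a/nn^2 + 2*D) * f)
      = W + (tc + p) + 1 - a * rho + E + D * Sf + D + 2 * D * f"
    using q unfolding ee2 by linarith
  have "D * (rho * Dl) \<le> D * (1 + 2 * f)" unfolding kk1 using kk2 D0 by (rule mult_left_mono)
  moreover have "rho * (p + E + D * Sf) \<le> p + E + D * Sf"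
    using r0 p0 E0 D0 S0 by (intro mult_left_le_one_le) auto
  moreover have "rho * (p - a + E + D * Sf) = rho * (p + E + D * Sf) - a * rho" by (simp add: algebra_simps)
  moreover have "D * (1 + 2 * f) = D + 2 * D * f" by (simp add: algebra_simps)
  ultimately show ?thesis unfolding Dl_def[symmetric] unfolding f_def[symmetric] L R by linarith
qed

lemma SB_B:
  assumes n2: "n \<ge> 2"
  shows "finite M \<Longrightarrow> None \<notin> M \<Longrightarrow> SB n t M \<le> WW n M + real t / real n ^ 3 + 1 - LL n t M"
proof (induction t arbitrary: M)
  case 0
  then show ?case by (simp add: WW_def LL_def)
next
  case (Suc t M)
  have npos: "real n > 0" using n2 by simp
  define a where "a = (1 - 1 / real n) ^ t"
  have r0: "0 \<le> 1 - 1 / real n" "1 - 1 / real n \<le> 1" using n2 by (auto simp: field_simps)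
  have a0: "0 \<le> a" unfolding a_def using r0 by simp
  have a1: "a \<le> 1" unfolding a_def using r0 by (simp add: power_le_one)
  define \<alpha> where "\<alpha> = a * (1 - 1 / real n) - Ee n t - Dd n t * Sf n M - Dd n t"
  define \<beta> where "\<beta> = a / real n ^ 2 + 2 * Dd n t"
  define Tm where "Tm = (\<lambda>j. (let N = nbr_off (inst_E n) j - M; S = (\<Sum>i'\<in>N. inst_x n i' j) in
        if N = {} \<or> S = 0 then SB n t M
        else (\<Sum>i\<in>N. (inst_x n i j / S) * SB n t (insert i M))))"
  define C where "C = WW n M + (real t / real n ^ 3 + 1 / real n ^ 3) + 1"
  have hterm: "Tm j \<le> C - (\<alpha> - \<beta> * ff n (cnt n M j))" if j: "j \<in> {1..n}" for j
  proof -
    define c where "c = cnt n M j"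
    define P where "P = priv n j - M"
    have cle: "c \<le> n - 1" unfolding c_def by (rule cnt_le)
    have N: "nbr_off (inst_E n) j - M = insert None P"
      using nbr_off_inst[OF j] Suc.prems(2) unfolding P_def by auto
    have PN: "None \<notin> P" unfolding P_def by simp
    have finP: "finite P" unfolding P_def by simp
    have cardP: "card P = n - 1 - c" unfolding P_def c_def by (rule card_priv_diff)
    have cn: "card P + c + 1 = n" using cardP cle n2 by linarith
    then have cnr: "real (card P) + real c + 1 = real n" by (metis of_nat_1 of_nat_add)
    define K where "K = real n - real c"
    have cardPr: "real (card P) = K - 1" unfolding K_def using cnr by linarith
    have K1: "K \<ge> 1" using cardPr by simp
    have Kpos: "K > 0" using K1 by simp
    have S: "(\<Sum>i'\<in>insert None P. inst_x n i' j) = K / real n"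
      using finP PN cardPr by (simp add: inst_x_def)
    have Snz: "K / real n \<noteq> 0" using Kpos npos by simp
    have xs: "inst_x n i j / (K / real n) = 1 / K" for i
      unfolding inst_x_def using npos Kpos by simp
    have Tm_eq: "Tm j = (1/K) * (SB n t (insert None M) + (\<Sum>i\<in>P. SB n t (insert i M)))"
    proof -
      have "Tm j = (\<Sum>i\<in>insert None P. (inst_x n i j / (K / real n)) * SB n t (insert i M))"
        unfolding Tm_def Let_def N S using Snz by simp
      also have "\<dots> = (\<Sum>i\<in>insert None P. (1/K) * SB n t (insert i M))" unfolding xs ..
      also have "\<dots> = (1/K) * (\<Sum>i\<in>insert None P. SB n t (insert i M))" by (simp add: sum_distrib_left)
      also have "\<dots> = (1/K) * (SB n t (insert None M) + (\<Sum>i\<in>P. SB n t (insert i M)))"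
        using finP PN by simp
      finally show ?thesis .
    qed
    have h1: "SB n t (insert None M) \<le> WW n M + 1 + real t / real n ^ 3"
      using SB_A[OF n2, of "insert None M" t] Suc.prems WW_insert[of M None n] by (simp add: inst_w_def)
    define V where "V = WW n M + 1 / real n ^ 3 + real t / real n ^ 3 + 1 -
        (a - Ee n t - Dd n t * (Sf n M + (ff n (c + 1) - ff n c)))"
    have h2: "SB n t (insert i M) \<le> V" if i: "i \<in> P" for i
    proof -
      have iM: "i \<notin> M" and ip: "i \<in> priv n j" using i unfolding P_def by auto
      have iN: "i \<noteq> None" using ip None_notin_priv by metis
      have "SB n t (insert i M) \<le> WW n (insert i M) + real t / real n ^ 3 + 1 - LL n t (insert i M)"
        using Suc.IH[of "insert i M"] Suc.prems iN by simp
      also have "WW n (insert i M) = WW n M + 1 / real n ^ 3"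
        using WW_insert[OF Suc.prems(1) iM] iN by (simp add: inst_w_def)
      also have "LL n t (insert i M) = a - Ee n t - Dd n t * (Sf n M + (ff n (c + 1) - ff n c))"
        unfolding LL_def a_def Sf_insert[OF j ip iM] c_def ..
      finally show ?thesis unfolding V_def .
    qed
    have h3: "(\<Sum>i\<in>P. SB n t (insert i M)) \<le> (K - 1) * V"
      using sum_bounded_above[of P "\<lambda>i. SB n t (insert i M)" V, OF h2] cardPr by simp
    have "Tm j \<le> (1/K) * ((WW n M + 1 + real t / real n ^ 3) + (K - 1) * V)"
      unfolding Tm_eq using Kpos h1 h3 by (intro mult_left_mono add_mono) auto
    also have "\<dots> \<le> C - (\<alpha> - \<beta> * ff n (cnt n M j))"
    proof -
      have ffe: "ff n (c + 1) - ff n c = real n * (real c + 1) / (real n - real c - 1) - real n * real c / (real n - real c)"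
        unfolding ff_def by (simp add: diff_diff_eq add.commute)
      have ffc: "ff n (cnt n M j) = real n * real c / (real n - real c)" unfolding ff_def c_def ..
      have "(1/K) * ((WW n M + 1 + real t / real n ^ 3) + (K - 1) * V) \<le>
        WW n M + (real t / real n ^ 3 + 1 / real n ^ 3) + 1 - ((a*(1 - 1/real n) - Ee n t - Dd n t * Sf n M - Dd n t)
           - (a/real n^2 + 2 * Dd n t) * (real n * real c/(real n - real c)))"
        unfolding V_def ffe
        by (rule alg[where nn="real n" and K=K and m="real c" and a=a and E="Ee n t" and D="Dd n t"
              and Sf="Sf n M" and W="WW n M" and tc="real t / real n ^ 3" and p="1 / real n ^ 3"])
           (use K1 a0 a1 Ee_nonneg Dd_nonneg Sf_nonneg n2 in \<open>auto simp: K_def\<close>)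
      then show ?thesis unfolding C_def \<alpha>_def \<beta>_def ffc .
    qed
    finally show ?thesis .
  qed
  have "SB n (Suc t) M = (\<Sum>j\<in>{1..n}. Tm j) / real n" unfolding Tm_def by (rule SB_Suc)
  also have "\<dots> \<le> (\<Sum>j\<in>{1..n}. C - (\<alpha> - \<beta> * ff n (cnt n M j))) / real n"
    using npos by (intro divide_right_mono sum_mono hterm) auto
  also have "\<dots> = C - \<alpha> + \<beta> * Sf n M / real n"
  proof -
    have "(\<Sum>j\<in>{1..n}. C - (\<alpha> - \<beta> * ff n (cnt n M j))) = (\<Sum>j\<in>{1..n}. (C - \<alpha>) + \<beta> * ff n (cnt n M j))"
      by (simp add: algebra_simps)
    also have "\<dots> = real n * (C - \<alpha>) + \<beta> * Sf n M"
      by (simp add: sum.distrib sum_distrib_left Sf_def)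
    finally show ?thesis using npos by (simp add: field_simps)
  qed
  also have "\<dots> \<le> WW n M + real (Suc t) / real n ^ 3 + 1 - LL n (Suc t) M"
  proof -
    have LLs: "LL n (Suc t) M = a * (1 - 1 / real n) - Ee n t - Dd n t - (1 + 2 / real n) * Dd n t * Sf n M - Sf n M / real n ^ 3"
      unfolding LL_def a_def by (simp add: algebra_simps power_Suc2)
    have id: "\<alpha> - \<beta> * Sf n M / real n - LL n (Suc t) M = Sf n M * (1 - a) / real n ^ 3"
      unfolding LLs \<alpha>_def \<beta>_def using npos by (simp add: field_simps power2_eq_square power3_eq_cube)
    have "Sf n M * (1 - a) / real n ^ 3 \<ge> 0" using Sf_nonneg[of n M] n2 a1 npos by simp
    moreover have "real (Suc t) / real n ^ 3 = real t / real n ^ 3 + 1 / real n ^ 3" by (simp add: add_divide_distrib)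
    ultimately show ?thesis using id unfolding C_def by linarith
  qed
  finally show ?case .
qed

lemma Dd_bound: "real n > 0 \<Longrightarrow> Dd n t \<le> real t * (1 + 2 / real n) ^ t / real n ^ 3"
proof (induction t)
  case 0 then show ?case by simp
next
  case (Suc t)
  define q where "q = 1 + 2 / real n"
  have q1: "q \<ge> 1" unfolding q_def using Suc.prems by simp
  have qt: "q ^ t \<ge> 1" "q ^ Suc t \<ge> 1" using q1 one_le_power by blast+
  have "Dd n (Suc t) = q * Dd n t + 1 / real n ^ 3" unfolding q_def by simp
  also have "\<dots> \<le> q * (real t * q ^ t / real n ^ 3) + 1 / real n ^ 3"
    using Suc q1 unfolding q_def by (intro add_right_mono mult_left_mono) auto
  also have "\<dots> = real t * q ^ Suc t / real n ^ 3 + 1 / real n ^ 3" by (simp add: algebra_simps)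
  also have "\<dots> \<le> real t * q ^ Suc t / real n ^ 3 + q ^ Suc t / real n ^ 3"
    using qt Suc.prems by (intro add_left_mono divide_right_mono) auto
  also have "\<dots> = real (Suc t) * q ^ Suc t / real n ^ 3" by (simp add: add_divide_distrib algebra_simps)
  finally show ?case unfolding q_def .
qed

lemma Ee_bound: "real n > 0 \<Longrightarrow> Ee n t \<le> real t ^ 2 * (1 + 2 / real n) ^ t / real n ^ 3"
proof (induction t)
  case 0 then show ?case by simp
next
  case (Suc t)
  define q where "q = 1 + 2 / real n"
  have q1: "q \<ge> 1" unfolding q_def using Suc.prems by simp
  have qm: "q ^ t \<le> q ^ Suc t" using q1 by (simp add: power_increasing)
  have q0: "q ^ t \<ge> 0" using q1 by simp
  have "Ee n (Suc t) = Ee n t + Dd n t" by simp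
  also have "\<dots> \<le> real t ^ 2 * q ^ t / real n ^ 3 + real t * q ^ t / real n ^ 3"
    using Suc Dd_bound[OF Suc.prems, of t] unfolding q_def by linarith
  also have "\<dots> = (real t ^ 2 + real t) * q ^ t / real n ^ 3" by (simp add: add_divide_distrib algebra_simps)
  also have "\<dots> \<le> (real (Suc t)) ^ 2 * q ^ Suc t / real n ^ 3"
  proof -
    have "(real t ^ 2 + real t) * q ^ t \<le> (real (Suc t)) ^ 2 * q ^ Suc t"
      using qm q0 by (intro mult_mono) (auto simp: power2_eq_square algebra_simps)
    then show ?thesis using Suc.prems by (simp add: divide_right_mono)
  qed
  finally show ?case unfolding q_def .
qed

lemma q_pow: "real n > 0 \<Longrightarrow> (1 + 2 / real n) ^ n \<le> 9"
proof -
  assume np: "real n > 0"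
  have "(1 + 2 / real n) ^ n \<le> exp (2 / real n) ^ n"
    using exp_ge_add_one_self[of "2 / real n"] np by (intro power_mono) auto
  also have "\<dots> = exp 2" using np by (simp add: exp_of_nat_mult[symmetric])
  also have "\<dots> = exp 1 * exp 1" by (simp add: exp_add[symmetric])
  also have "\<dots> \<le> 3 * 3" using exp_le by (intro mult_mono) auto
  finally show ?thesis by simp
qed

lemma Ee_final: "n \<ge> 1 \<Longrightarrow> Ee n n \<le> 9 / real n"
proof -
  assume n1: "n \<ge> 1"
  then have np: "real n > 0" by simp
  have "Ee n n \<le> real n ^ 2 * (1 + 2 / real n) ^ n / real n ^ 3" by (rule Ee_bound[OF np])
  also have "\<dots> \<le> real n ^ 2 * 9 / real n ^ 3"
    using q_pow[OF np] np by (intro divide_right_mono mult_left_mono) auto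
  also have "\<dots> = 9 / real n" using np by (simp add: field_simps power2_eq_square power3_eq_cube)
  finally show ?thesis .
qed

lemma rpow_lower: "n \<ge> 2 \<Longrightarrow> (1 - 1 / real n) ^ n \<ge> exp (-1) - 2 / real n"
proof -
  assume n2: "n \<ge> 2"
  then have np: "real n > 0" by simp
  define x where "x = 1 / real n"
  have x0: "0 \<le> x" "x \<le> 1/2" unfolding x_def using n2 by (auto simp: field_simps)
  have r: "1 - x > 0" using x0 by simp
  have lnb: "- x - 2 * x^2 \<le> ln (1 - x)" by (rule ln_one_minus_pos_lower_bound[OF x0])
  have e1: "(1 - x) ^ n = exp (real n * ln (1 - x))"
  proof -
    have "(1 - x) ^ n = exp (ln ((1 - x) ^ n))" using r by simp
    also have "ln ((1 - x) ^ n) = real n * ln (1 - x)" by (simp add: ln_realpow)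
    finally show ?thesis .
  qed
  have e2: "exp (real n * (- x - 2 * x^2)) \<le> exp (real n * ln (1 - x))"
    using lnb np by (simp add: mult_left_mono)
  have e3: "real n * (- x - 2 * x^2) = -1 + (- 2 / real n)" unfolding x_def using np
    by (simp add: field_simps power2_eq_square)
  have e4: "exp (-1) * (1 + (- 2 / real n)) \<le> exp (-1) * exp (- 2 / real n)"
    by (intro mult_left_mono exp_ge_add_one_self) auto
  have e5: "exp (-1) - 2 / real n \<le> exp (-1) * (1 + (- 2 / real n))"
  proof -
    have "exp (-1) * (2 / real n) \<le> 1 * (2 / real n)" using np by (intro mult_right_mono) auto
    then show ?thesis by (simp add: algebra_simps)
  qed
  have "exp (-1) - 2 / real n \<le> exp (-1 + (- 2 / real n))"
    using e4 e5 exp_add[of "-1" "- 2 / real n"] by linarith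
  also have "\<dots> \<le> (1 - x) ^ n" using e1 e2 e3 by simp
  finally show ?thesis unfolding x_def .
qed

lemma sampB_bound:
  assumes n2: "n \<ge> 2"
  shows "sampB_value (inst_J n) (inst_E n) (inst_w n) (inst_x n) \<le> 1 - exp (-1) + 12 / real n"
proof -
  have np: "real n > 0" using n2 by simp
  have cJ: "card (inst_J n) = n" by (simp add: inst_J_def)
  have "sampB_value (inst_J n) (inst_E n) (inst_w n) (inst_x n) = SB n n {}"
    unfolding sampB_value_def cJ ..
  also have "\<dots> \<le> WW n {} + real n / real n ^ 3 + 1 - LL n n {}"
    using SB_B[OF n2, of "{}" n] by simp
  also have "\<dots> = 1 / real n ^ 2 + 1 - (1 - 1 / real n) ^ n + Ee n n"
    using np by (simp add: WW_def LL_def Sf_empty power2_eq_square power3_eq_cube)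
  also have "\<dots> \<le> 1 / real n + 1 - (exp (-1) - 2 / real n) + 9 / real n"
  proof -
    have "1 / real n ^ 2 \<le> 1 / real n" using n2 np
      by (intro divide_left_mono) (auto simp: power2_eq_square)
    then show ?thesis using rpow_lower[OF n2] Ee_final[of n] n2 by linarith
  qed
  also have "\<dots> = 1 - exp (-1) + 12 / real n" by (simp add: field_simps)
  finally show ?thesis .
qed

lemma inst_I_eq: "inst_I n = insert None (Some ` ({1..n} \<times> {1..n-1}))"
  by (auto simp: inst_I_def)

lemma nbr_on_None: "nbr_on (inst_E n) None = {1..n}"
  by (auto simp: nbr_on_def inst_E_def)

lemma nbr_on_Some: "p \<in> {1..n} \<times> {1..n-1} \<Longrightarrow> nbr_on (inst_E n) (Some p) = {fst p}"
  by (cases p) (auto simp: nbr_on_def inst_E_def)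

lemma obj_formula:
  "lp_obj (inst_I n) (inst_E n) (inst_w n) y =
     (\<Sum>j\<in>{1..n}. y None j) + (1 / real n ^ 3) * (\<Sum>p\<in>{1..n} \<times> {1..n-1}. y (Some p) (fst p))"
proof -
  define A where "A = {1..n} \<times> {1..n-1}"
  have finA: "finite A" unfolding A_def by simp
  have "lp_obj (inst_I n) (inst_E n) (inst_w n) y =
      (\<Sum>i\<in>insert None (Some ` A). inst_w n i * (\<Sum>j\<in>nbr_on (inst_E n) i. y i j))"
    unfolding lp_obj_def inst_I_eq A_def ..
  also have "\<dots> = inst_w n None * (\<Sum>j\<in>nbr_on (inst_E n) None. y None j) +
      (\<Sum>i\<in>Some ` A. inst_w n i * (\<Sum>j\<in>nbr_on (inst_E n) i. y i j))"
    using finA by (simp add: sum.insert)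
  also have "(\<Sum>i\<in>Some ` A. inst_w n i * (\<Sum>j\<in>nbr_on (inst_E n) i. y i j))
      = (\<Sum>p\<in>A. inst_w n (Some p) * (\<Sum>j\<in>nbr_on (inst_E n) (Some p). y (Some p) j))"
    by (simp add: sum.reindex)
  also have "\<dots> = (\<Sum>p\<in>A. (1 / real n ^ 3) * y (Some p) (fst p))"
    by (intro sum.cong refl) (simp add: nbr_on_Some A_def inst_w_def)
  also have "\<dots> = (1 / real n ^ 3) * (\<Sum>p\<in>A. y (Some p) (fst p))" by (simp add: sum_distrib_left)
  also have "inst_w n None = 1" by (simp add: inst_w_def)
  finally show ?thesis unfolding nbr_on_None A_def by simp
qed

lemma obj_x: "n \<ge> 1 \<Longrightarrow> lp_obj (inst_I n) (inst_E n) (inst_w n) (inst_x n) = 1 + 1 / real n ^ 2 - 1 / real n ^ 3"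
proof -
  assume n1: "n \<ge> 1"
  then have np: "real n > 0" by simp
  have c: "real (card ({1..n} \<times> {1..n-1})) = real n * (real n - 1)"
    using n1 by (simp add: card_cartesian_product of_nat_diff)
  show ?thesis unfolding obj_formula using np c
    by (simp add: inst_x_def field_simps power2_eq_square power3_eq_cube)
qed

lemma C1_inst:
  assumes "lp_feasible K (inst_I n) (inst_J n) (inst_E n) y" "j \<in> {1..n}"
  shows "y None j + (\<Sum>k\<in>{1..n-1}. y (Some (j, k)) j) \<le> 1"
proof -
  have "(\<Sum>i\<in>nbr_off (inst_E n) j. y i j) \<le> 1"
    using assms unfolding lp_feasible_def inst_J_def by auto
  also have "(\<Sum>i\<in>nbr_off (inst_E n) j. y i j) = y None j + (\<Sum>i\<in>priv n j. y i j)"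
    unfolding nbr_off_inst[OF assms(2)] by simp
  also have "(\<Sum>i\<in>priv n j. y i j) = (\<Sum>k\<in>{1..n-1}. y (Some (j, k)) j)"
    unfolding priv_def by (subst sum.reindex) (auto simp: inj_on_def)
  finally show ?thesis .
qed

lemma opt_bound:
  assumes n1: "n \<ge> 1" and F: "lp_feasible K (inst_I n) (inst_J n) (inst_E n) y"
  shows "lp_obj (inst_I n) (inst_E n) (inst_w n) y \<le> 1 + 1 / real n ^ 2 - 1 / real n ^ 3"
proof -
  have np: "real n > 0" using n1 by simp
  define A where "A = (\<Sum>j\<in>{1..n}. y None j)"
  define P where "P = (\<Sum>p\<in>{1..n} \<times> {1..n-1}. y (Some p) (fst p))"
  have A1: "A \<le> 1"
  proof -
    have "None \<in> inst_I n" by (simp add: inst_I_def)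
    then have "(\<Sum>j\<in>nbr_on (inst_E n) None. y None j) \<le> 1" using F unfolding lp_feasible_def by auto
    then show ?thesis unfolding A_def nbr_on_None .
  qed
  have "P = (\<Sum>j\<in>{1..n}. \<Sum>k\<in>{1..n-1}. y (Some (j, k)) j)"
    unfolding P_def by (simp add: sum.cartesian_product case_prod_beta)
  also have "\<dots> \<le> (\<Sum>j\<in>{1..n}. 1 - y None j)"
    using C1_inst[OF F] by (intro sum_mono) (simp add: algebra_simps)
  also have "\<dots> = real n - A" unfolding A_def by (simp add: sum_subtractf)
  finally have PA: "P \<le> real n - A" .
  have n3: "1 / real n ^ 3 \<le> 1" using n1 by (simp add: field_simps)
  have "lp_obj (inst_I n) (inst_E n) (inst_w n) y = A + (1 / real n ^ 3) * P"
    unfolding obj_formula A_def P_def ..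
  also have "\<dots> \<le> A + (1 / real n ^ 3) * (real n - A)" using PA np by (intro add_left_mono mult_left_mono) auto
  also have "\<dots> = A * (1 - 1 / real n ^ 3) + 1 / real n ^ 2"
    using np by (simp add: field_simps power2_eq_square power3_eq_cube)
  also have "\<dots> \<le> 1 * (1 - 1 / real n ^ 3) + 1 / real n ^ 2"
    using A1 n3 by (intro add_right_mono mult_right_mono) auto
  finally show ?thesis by simp
qed

lemma c3:
  assumes "s \<le> K" "2 * K \<le> n" "n \<ge> 1"
  shows "real s * (1 / real n) \<le> 1 - exp (- real s)"
proof (cases "s = 0")
  case True then show ?thesis by simp
next
  case False
  have np: "real n > 0" using assms by simp
  have "real s * (1 / real n) \<le> 1 / 2"
  proof -
    have "2 * real s \<le> real n" using assms by linarith
    then show ?thesis using np by (simp add: field_simps)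
  qed
  moreover have "exp (- real s) \<le> 1 / 2"
  proof -
    have e: "exp (real s) \<ge> 2" using exp_ge_add_one_self[of "real s"] False by linarith
    have "exp (- real s) = 1 / exp (real s)" by (rule exp_minus')
    also have "\<dots> \<le> 1 / 2" using e by (intro divide_left_mono) auto
    finally show ?thesis .
  qed
  ultimately show ?thesis by linarith
qed

lemma feas_x:
  assumes n1: "n \<ge> 1" and nK: "2 * K \<le> n"
  shows "lp_feasible K (inst_I n) (inst_J n) (inst_E n) (inst_x n)"
proof -
  have np: "real n > 0" using n1 by simp
  have a: "\<forall>(i, j) \<in> inst_E n. inst_x n i j \<ge> 0" by (auto simp: inst_x_def)
  have b: "\<forall>j \<in> inst_J n. (\<Sum>i \<in> nbr_off (inst_E n) j. inst_x n i j) \<le> 1"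
  proof
    fix j assume "j \<in> inst_J n"
    then have j: "j \<in> {1..n}" by (simp add: inst_J_def)
    have "card (nbr_off (inst_E n) j) = n" unfolding nbr_off_inst[OF j] using n1 by (simp add: card_priv)
    then show "(\<Sum>i \<in> nbr_off (inst_E n) j. inst_x n i j) \<le> 1" using np by (simp add: inst_x_def)
  qed
  have c: "\<forall>i \<in> inst_I n. (\<Sum>j \<in> nbr_on (inst_E n) i. inst_x n i j) \<le> 1"
  proof
    fix i assume "i \<in> inst_I n"
    then consider "i = None" | p where "p \<in> {1..n} \<times> {1..n-1}" "i = Some p" unfolding inst_I_eq by auto
    then show "(\<Sum>j \<in> nbr_on (inst_E n) i. inst_x n i j) \<le> 1"
    proof cases
      case 1 then show ?thesis using np by (simp add: nbr_on_None inst_x_def)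
    next
      case 2 then show ?thesis using n1 by (simp add: nbr_on_Some inst_x_def)
    qed
  qed
  have d: "\<forall>i \<in> inst_I n. \<forall>S. S \<subseteq> nbr_on (inst_E n) i \<and> card S \<le> K \<longrightarrow>
          (\<Sum>j \<in> S. inst_x n i j) \<le> 1 - exp (- real (card S))"
  proof (intro ballI allI impI)
    fix i S assume "S \<subseteq> nbr_on (inst_E n) i \<and> card S \<le> K"
    then have "card S \<le> K" by simp
    then show "(\<Sum>j \<in> S. inst_x n i j) \<le> 1 - exp (- real (card S))"
      using c3[of "card S" K n] nK n1 by (simp add: inst_x_def)
  qed
  show ?thesis unfolding lp_feasible_def using a b c d by blast
qed

lemma main_n:
  assumes n3: "n \<ge> 3" and nK: "2 * K \<le> n"
  shows "lp_optimal K (inst_I n) (inst_J n) (inst_E n) (inst_w n) (inst_x n) \<and>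
            lp_obj (inst_I n) (inst_E n) (inst_w n) (inst_x n) = 1 + 1 / real n ^ 2 - 1 / real n ^ 3 \<and>
            sampB_value (inst_J n) (inst_E n) (inst_w n) (inst_x n)
              \<le> (1 - exp (-1) + 12 * ln (real n) / real n) *
                 lp_obj (inst_I n) (inst_E n) (inst_w n) (inst_x n)"
proof -
  have n1: "n \<ge> 1" and n2: "n \<ge> 2" using n3 by auto
  have np: "real n > 0" using n1 by simp
  have obj: "lp_obj (inst_I n) (inst_E n) (inst_w n) (inst_x n) = 1 + 1 / real n ^ 2 - 1 / real n ^ 3"
    by (rule obj_x[OF n1])
  have opt: "lp_optimal K (inst_I n) (inst_J n) (inst_E n) (inst_w n) (inst_x n)"
    unfolding lp_optimal_def using feas_x[OF n1 nK] opt_bound[OF n1] obj by auto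
  have ln1: "ln (real n) \<ge> 1"
  proof -
    have "exp 1 \<le> real n" using exp_le n3 by linarith
    then show ?thesis using np by (simp add: ln_ge_iff)
  qed
  have obj1: "1 + 1 / real n ^ 2 - 1 / real n ^ 3 \<ge> 1"
  proof -
    have "1 / real n ^ 3 \<le> 1 / real n ^ 2" using n1 np
      by (intro divide_left_mono power_increasing) (auto simp: power2_eq_square)
    then show ?thesis by linarith
  qed
  have e1: "exp (-1::real) \<le> 1" by simp
  have X0: "0 \<le> 1 - exp (-1) + 12 * ln (real n) / real n" using e1 ln1 np by simp
  have "sampB_value (inst_J n) (inst_E n) (inst_w n) (inst_x n) \<le> 1 - exp (-1) + 12 / real n"
    by (rule sampB_bound[OF n2])
  also have "\<dots> \<le> 1 - exp (-1) + 12 * ln (real n) / real n"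
    using ln1 np by (simp add: divide_right_mono)
  also have "\<dots> = (1 - exp (-1) + 12 * ln (real n) / real n) * 1" by simp
  also have "\<dots> \<le> (1 - exp (-1) + 12 * ln (real n) / real n) * (1 + 1 / real n ^ 2 - 1 / real n ^ 3)"
    using obj1 X0 by (rule mult_left_mono)
  finally show ?thesis using opt obj by simp
qed

theorem mainTheorem10:
  fixes K :: nat
  assumes "K \<ge> 1"
  shows "(\<exists>N0 C. \<forall>n \<ge> N0.
            lp_optimal K (inst_I n) (inst_J n) (inst_E n) (inst_w n) (inst_x n) \<and>
            lp_obj (inst_I n) (inst_E n) (inst_w n) (inst_x n) = 1 + 1 / real n ^ 2 - 1 / real n ^ 3 \<and>
            sampB_value (inst_J n) (inst_E n) (inst_w n) (inst_x n)
              \<le> (1 - exp (-1) + C * ln (real n) / real n) *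
                 lp_obj (inst_I n) (inst_E n) (inst_w n) (inst_x n))
       \<and> (\<forall>c > 1 - exp (-1). \<exists>n \<ge> 2. \<exists>x.
            lp_optimal K (inst_I n) (inst_J n) (inst_E n) (inst_w n) x \<and>
            sampB_value (inst_J n) (inst_E n) (inst_w n) x < c * lp_obj (inst_I n) (inst_E n) (inst_w n) x)"
proof
  show "\<exists>N0 C. \<forall>n \<ge> N0.
            lp_optimal K (inst_I n) (inst_J n) (inst_E n) (inst_w n) (inst_x n) \<and>
            lp_obj (inst_I n) (inst_E n) (inst_w n) (inst_x n) = 1 + 1 / real n ^ 2 - 1 / real n ^ 3 \<and>
            sampB_value (inst_J n) (inst_E n) (inst_w n) (inst_x n)
              \<le> (1 - exp (-1) + C * ln (real n) / real n) *
                 lp_obj (inst_I n) (inst_E n) (inst_w n) (inst_x n)"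
    by (rule exI[of _ "max 3 (2 * K)"], rule exI[of _ 12]) (auto intro!: main_n)
next
  show "\<forall>c > 1 - exp (-1). \<exists>n \<ge> 2. \<exists>x.
            lp_optimal K (inst_I n) (inst_J n) (inst_E n) (inst_w n) x \<and>
            sampB_value (inst_J n) (inst_E n) (inst_w n) x < c * lp_obj (inst_I n) (inst_E n) (inst_w n) x"
  proof (intro allI impI)
    fix c :: real assume c: "c > 1 - exp (-1)"
    define \<delta> where "\<delta> = c - (1 - exp (-1))"
    have d0: "\<delta> > 0" unfolding \<delta>_def using c by simp
    have lim: "((\<lambda>n::nat. ln (real n) / real n) \<longlongrightarrow> 0) sequentially"
      by (rule filterlim_compose[OF ln_x_over_x_tendsto_0 filterlim_real_sequentially])
    have ev1: "eventually (\<lambda>n. ln (real n) / real n < \<delta> / 12) sequentially"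
      by (rule order_tendstoD(2)[OF lim]) (use d0 in simp)
    have ev2: "eventually (\<lambda>n. n \<ge> max 3 (2 * K)) sequentially" by (rule eventually_ge_at_top)
    obtain N where N: "\<forall>n\<ge>N. ln (real n) / real n < \<delta> / 12 \<and> n \<ge> max 3 (2 * K)"
      using eventually_conj[OF ev1 ev2] unfolding eventually_sequentially by blast
    then have hN: "ln (real N) / real N < \<delta> / 12" "N \<ge> 3" "2 * K \<le> N" by auto
    note M = main_n[OF hN(2,3)]
    have np: "real N > 0" using hN by simp
    have objpos: "lp_obj (inst_I N) (inst_E N) (inst_w N) (inst_x N) > 0"
    proof -
      have "1 / real N ^ 3 \<le> 1 / real N ^ 2" using hN np
        by (intro divide_left_mono power_increasing) (auto simp: power2_eq_square)
      then show ?thesis using M by simp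
    qed
    have lt: "1 - exp (-1) + 12 * ln (real N) / real N < c"
      using hN(1) unfolding \<delta>_def by (simp add: field_simps)
    have "sampB_value (inst_J N) (inst_E N) (inst_w N) (inst_x N) < c * lp_obj (inst_I N) (inst_E N) (inst_w N) (inst_x N)"
      using M mult_strict_right_mono[OF lt objpos] by linarith
    then show "\<exists>n \<ge> 2. \<exists>x.
            lp_optimal K (inst_I n) (inst_J n) (inst_E n) (inst_w n) x \<and>
            sampB_value (inst_J n) (inst_E n) (inst_w n) x < c * lp_obj (inst_I n) (inst_E n) (inst_w n) x"
      using M hN(2) by (intro exI[of _ N]) auto
  qed
qed

end
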